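(* Let $g_1,g_2$ be independent exponential random variables with means $\varepsilon_1,\varepsilon_2>0$, let $P_s,P_d,\sigma^2>0$ and $R_d>0$, and put $\gamma_o=2^{2R_d}-1$. Then the connection outage probability of amplify-and-forward relaying, $$p_o^{\mathrm{AF}}=\Pr\Big(\frac{P_s^2g_1g_2}{\sigma^2[P_sg_1+(P_s+P_d)g_2+\sigma^2]}<\gamma_o\Big),$$ equals $$1-e^{-\frac{\gamma_o\sigma^2}{P_s}\left(\frac{P_s+P_d}{P_s\varepsilon_1}+\frac1{\varepsilon_2}\right)}\,z\,K_1(z),\qquad z=\frac{2\gamma_o\sigma^2}{P_s}\sqrt{\frac{1}{\varepsilon_1\varepsilon_2}\Big(\frac{P_s+P_d}{P_s}+\frac1{\gamma_o}\Big)},$$ where $K_1$ is the first-order modified Bessel function of the second kind.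
   Context: In amplify-and-forward (AF) relaying the relay scales its received signal $h_1x_s+h_2x_d+n_r$ by $\tau=\sqrt{P_s/(g_1P_s+g_2P_d+\sigma^2)}$ and forwards it; after the destination removes its own known artificial noise, the end-to-end SNR is $\frac{P_s^2g_1g_2}{\sigma^2[P_sg_1+P_sg_2+P_dg_2+\sigma^2]}$. Here $g_i=|h_i|^2$, $h_i\sim\mathcal{CN}(0,\varepsilon_i)$ independent, $P_s$ the source/relay power, $P_d$ the destination's artificial-noise power, $\sigma^2$ the noise variance. *)

theory Defs
  imports "HOL-Probability.Probability"
begin

text \<open>Modified Bessel function of the second kind of order one, for z > 0,
  via its standard integral representation (DLMF 10.32.9):
  K_1(z) = integral over t in [0,oo) of exp(-z cosh t) cosh t.\<close>
definition besselK1 :: "real \<Rightarrow> real" where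
  "besselK1 z = (LBINT t:{0..}. exp (- z * cosh t) * cosh t)"

end

theory Submission
  imports Defs
begin


lemma exp_tail:
  fixes l T :: real
  assumes l: "0 < l" and T: "0 \<le> T"
  shows "(\<integral>\<^sup>+x. ennreal (exponential_density l x) * indicator {T..} x \<partial>lborel) = ennreal (exp (- T * l))"
proof -
  have "(\<integral>\<^sup>+x. ennreal (exponential_density l x) * indicator {T..} x \<partial>lborel)
      = (\<integral>\<^sup>+x. ennreal (exponential_density l (T + 1 * x)) * indicator {T..} (T + 1 * x) \<partial>lborel)"
    using nn_integral_real_affine[where f="\<lambda>x. ennreal (exponential_density l x) * indicator {T..} x" and c=1 and t=T]
    by simp
  also have "\<dots> = (\<integral>\<^sup>+x. ennreal (exp (- T * l)) * ennreal (exponential_density l x) \<partial>lborel)"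
    apply (intro nn_integral_cong)
    using T l by (auto simp: exponential_density_def ennreal_mult'[symmetric] exp_add[symmetric] 
          algebra_simps split: split_indicator)
  also have "\<dots> = ennreal (exp (- T * l)) * (\<integral>\<^sup>+x. ennreal (exponential_density l x) \<partial>lborel)"
    by (rule nn_integral_cmult) auto
  also have "(\<integral>\<^sup>+x. ennreal (exponential_density l x) \<partial>lborel) = 1"
    using nn_integral_erlang_ith_moment[OF l, of 0 0] by simp
  finally show ?thesis by simp
qed

lemma SUP_attained:
  fixes f :: "nat \<Rightarrow> 'b::complete_lattice"
  assumes "\<And>n. f n \<le> a" and "f N = a"
  shows "(SUP n. f n) = a"
  by (metis assms SUP_upper UNIV_I antisym SUP_least)

lemma subst_exp:
  fixes h :: "real \<Rightarrow> real" and k :: real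
  assumes k: "0 < k" and h[measurable]: "h \<in> borel_measurable borel" and hnn: "\<And>u. 0 \<le> h u"
  shows "(\<integral>\<^sup>+u. ennreal (h u) * indicator {0<..} u \<partial>lborel)
       = (\<integral>\<^sup>+t. ennreal (h (k * exp t) * (k * exp t)) \<partial>lborel)"
proof -
  define F where "F = (\<lambda>(n::nat) u. ennreal (h u * indicator {k * exp (- real n) .. k * exp (real n)} u))"
  define G where "G = (\<lambda>(n::nat) t. ennreal (h (k * exp t) * (k * exp t) * indicator {- real n .. real n} t))"
  have FG: "integral\<^sup>N lborel (F n) = integral\<^sup>N lborel (G n)" for n
  proof -
    have "(\<integral>\<^sup>+x. h x * indicator {(\<lambda>t. k * exp t) (- real n)..(\<lambda>t. k * exp t) (real n)} x \<partial>lborel) =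
             (\<integral>\<^sup>+x. h ((\<lambda>t. k * exp t) x) * (k * exp x) * indicator {- real n.. real n} x \<partial>lborel)"
      by (rule nn_integral_substitution) (auto simp: set_borel_measurable_def intro!: derivative_eq_intros continuous_intros k less_imp_le simp: k)
    then show ?thesis by (simp add: F_def G_def)
  qed
  have incF: "incseq F"
  proof (intro incseq_SucI le_funI)
    fix n u
    have a1: "k * exp (- real (Suc n)) \<le> k * exp (- real n)" using k by simp
    have a2: "k * exp (real n) \<le> k * exp (real (Suc n))" using k by simp
    have sub: "{k * exp (- real n) .. k * exp (real n)} \<subseteq> {k * exp (- real (Suc n)) .. k * exp (real (Suc n))}"
      using a1 a2 by auto
    show "F n u \<le> F (Suc n) u"
    proof (cases "u \<in> {k * exp (- real n) .. k * exp (real n)}")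
      case True
      then have "u \<in> {k * exp (- real (Suc n)) .. k * exp (real (Suc n))}" using sub by blast
      with True show ?thesis by (simp add: F_def)
    next
      case False
      then show ?thesis by (simp add: F_def)
    qed
  qed
  have incG: "incseq G"
    by (intro incseq_SucI le_funI) (auto simp: G_def k hnn split: split_indicator intro!: ennreal_leI)
  have SF: "(SUP n. F n u) = ennreal (h u) * indicator {0<..} u" for u
  proof (cases "0 < u")
    case True
    define N where "N = nat \<lceil>\<bar>ln (u / k)\<bar>\<rceil>"
    have N: "\<bar>ln (u / k)\<bar> \<le> real N" unfolding N_def by linarith
    have "k * exp (- real N) \<le> u"
    proof -
      have "exp (- real N) \<le> exp (ln (u / k))" using N by auto
      also have "\<dots> = u / k" using True k by simp
      finally show ?thesis using k by (simp add: field_simps)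
    qed
    moreover have "u \<le> k * exp (real N)"
    proof -
      have "u / k = exp (ln (u / k))" using True k by simp
      also have "\<dots> \<le> exp (real N)" using N by auto
      finally show ?thesis using k by (simp add: field_simps)
    qed
    ultimately show ?thesis
      by (intro SUP_attained[where N=N]) (auto simp: F_def True split: split_indicator intro!: ennreal_leI)
  next
    case False
    have pos: "k * exp (- real n) > 0" for n using k by simp
    have "u \<notin> {k * exp (- real n) .. k * exp (real n)}" for n using False pos[of n] by auto
    then have "F n u = 0" for n by (simp add: F_def)
    then show ?thesis using False by simp
  qed
  have SG: "(SUP n. G n t) = ennreal (h (k * exp t) * (k * exp t))" for t
  proof -
    define N where "N = nat \<lceil>\<bar>t\<bar>\<rceil>"
    have N: "\<bar>t\<bar> \<le> real N" unfolding N_def by linarith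
    show ?thesis
      by (intro SUP_attained[where N=N]) (use N in \<open>auto simp: G_def k hnn split: split_indicator intro!: ennreal_leI\<close>)
  qed
  have "(\<integral>\<^sup>+u. ennreal (h u) * indicator {0<..} u \<partial>lborel) = (\<integral>\<^sup>+u. (SUP n. F n u) \<partial>lborel)"
    by (simp add: SF)
  also have "\<dots> = (SUP n. integral\<^sup>N lborel (F n))"
    by (rule nn_integral_monotone_convergence_SUP[OF incF]) (auto simp: F_def)
  also have "\<dots> = (SUP n. integral\<^sup>N lborel (G n))" by (simp add: FG)
  also have "\<dots> = (\<integral>\<^sup>+t. (SUP n. G n t) \<partial>lborel)"
    by (rule nn_integral_monotone_convergence_SUP[OF incG, symmetric]) (auto simp: G_def)
  also have "\<dots> = (\<integral>\<^sup>+t. ennreal (h (k * exp t) * (k * exp t)) \<partial>lborel)" by (simp add: SG)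
  finally show ?thesis .
qed



lemma sym_cosh:
  fixes z :: real
  shows "(\<integral>\<^sup>+t. ennreal (exp (- z * cosh t) * exp t) \<partial>lborel)
       = (\<integral>\<^sup>+t. ennreal (exp (- z * cosh t) * (2 * cosh t)) * indicator {0..} t \<partial>lborel)"
proof -
  define F where "F = (\<lambda>t::real. exp (- z * cosh t) * exp t)"
  define G where "G = (\<lambda>t::real. exp (- z * cosh t) * exp (- t))"
  have [measurable]: "F \<in> borel_measurable borel" "G \<in> borel_measurable borel"
    unfolding F_def G_def by (auto intro!: borel_measurable_continuous_onI continuous_intros)
  have "(\<integral>\<^sup>+t. ennreal (F t) \<partial>lborel)
     = (\<integral>\<^sup>+t. ennreal (F t) * indicator {0..} t + ennreal (F t) * indicator {..<0} t \<partial>lborel)"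
    by (intro nn_integral_cong) (auto split: split_indicator)
  also have "\<dots> = (\<integral>\<^sup>+t. ennreal (F t) * indicator {0..} t \<partial>lborel) + (\<integral>\<^sup>+t. ennreal (F t) * indicator {..<0} t \<partial>lborel)"
    by (rule nn_integral_add) auto
  also have "(\<integral>\<^sup>+t. ennreal (F t) * indicator {..<0} t \<partial>lborel)
      = (\<integral>\<^sup>+t. ennreal (F (0 + (-1) * t)) * indicator {..<0} (0 + (-1) * t) \<partial>lborel)"
    using nn_integral_real_affine[where f="\<lambda>t. ennreal (F t) * indicator {..<0} t" and c="-1" and t=0]
    by simp
  also have "\<dots> = (\<integral>\<^sup>+t. ennreal (G t) * indicator {0<..} t \<partial>lborel)"
    by (intro nn_integral_cong) (auto simp: F_def G_def split: split_indicator)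
  also have "\<dots> = (\<integral>\<^sup>+t. ennreal (G t) * indicator {0..} t \<partial>lborel)"
    by (intro nn_integral_cong_AE) (use AE_lborel_singleton[of 0] in \<open>auto elim!: eventually_mono split: split_indicator\<close>)
  also have "(\<integral>\<^sup>+t. ennreal (F t) * indicator {0..} t \<partial>lborel) + (\<integral>\<^sup>+t. ennreal (G t) * indicator {0..} t \<partial>lborel)
      = (\<integral>\<^sup>+t. ennreal (F t) * indicator {0..} t + ennreal (G t) * indicator {0..} t \<partial>lborel)"
    by (rule nn_integral_add[symmetric]) auto
  also have "\<dots> = (\<integral>\<^sup>+t. ennreal (exp (- z * cosh t) * (2 * cosh t)) * indicator {0..} t \<partial>lborel)"
  proof (intro nn_integral_cong)
    fix t :: real
    have "F t + G t = exp (- z * cosh t) * (2 * cosh t)"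
      by (simp add: F_def G_def cosh_def algebra_simps)
    moreover have "F t \<ge> 0" "G t \<ge> 0" by (auto simp: F_def G_def)
    ultimately show "ennreal (F t) * indicator {0..} t + ennreal (G t) * indicator {0..} t
        = ennreal (exp (- z * cosh t) * (2 * cosh t)) * indicator {0..} t"
      by (auto split: split_indicator simp: ennreal_plus[symmetric])
  qed
  finally show ?thesis by (simp add: F_def)
qed

lemma inner:
  fixes Ps Pd s g l1 y :: real
  assumes Ps: "Ps > 0" and Pd: "Pd > 0" and s: "s > 0" and g: "g > 0" and l1: "l1 > 0" and y: "0 \<le> y"
  shows "(\<integral>\<^sup>+x. ennreal (exponential_density l1 x) *
            indicator {x. \<not> (Ps\<^sup>2 * x * y / (s * (Ps * x + (Ps + Pd) * y + s)) < g)} x \<partial>lborel)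
       = (if g * s / Ps < y then ennreal (exp (- (g * s * ((Ps + Pd) * y + s) / (Ps\<^sup>2 * (y - g * s / Ps))) * l1)) else 0)"
proof -
  define c where "c = g * s / Ps"
  have key: "(\<not> (Ps\<^sup>2 * x * y / (s * (Ps * x + (Ps + Pd) * y + s)) < g)) \<longleftrightarrow>
      g * s * ((Ps + Pd) * y + s) \<le> x * (Ps\<^sup>2 * (y - c))" if x: "0 \<le> x" for x
  proof -
    have D: "s * (Ps * x + (Ps + Pd) * y + s) > 0" using Ps Pd s x y by (intro mult_pos_pos) (auto intro!: add_nonneg_pos add_nonneg_nonneg)
    have "(Ps\<^sup>2 * x * y / (s * (Ps * x + (Ps + Pd) * y + s)) < g) \<longleftrightarrow>
          Ps\<^sup>2 * x * y < g * (s * (Ps * x + (Ps + Pd) * y + s))"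
      using D by (simp add: pos_divide_less_eq mult.commute)
    moreover have "Ps\<^sup>2 * x * y - g * (s * (Ps * x + (Ps + Pd) * y + s))
        = x * (Ps\<^sup>2 * (y - c)) - g * s * ((Ps + Pd) * y + s)"
      using Ps by (simp add: c_def power2_eq_square field_simps)
    ultimately show ?thesis by linarith
  qed
  show ?thesis
  proof (cases "c < y")
    case False
    have "ennreal (exponential_density l1 x) *
            indicator {x. \<not> (Ps\<^sup>2 * x * y / (s * (Ps * x + (Ps + Pd) * y + s)) < g)} x = 0" (is "?f x = 0") if "True" for x
    proof (cases "x < 0")
      case True then show ?thesis by (simp add: exponential_density_def)
    next
      case xn: False
      have "x * (Ps\<^sup>2 * (y - c)) \<le> 0"
        using False xn Ps by (intro mult_nonneg_nonpos) auto
      moreover have "g * s * ((Ps + Pd) * y + s) > 0"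
        using g s Ps Pd y by (intro mult_pos_pos) (auto intro!: add_nonneg_pos)
      ultimately show ?thesis using key[of x] xn by (auto split: split_indicator)
    qed
    note zz = this
    have "(\<integral>\<^sup>+x. ?f x \<partial>lborel) = (\<integral>\<^sup>+(x::real). 0 \<partial>lborel)" by (rule nn_integral_cong) (rule zz, simp)
    then show ?thesis using False by (simp add: c_def)
  next
    case True
    define T where "T = g * s * ((Ps + Pd) * y + s) / (Ps\<^sup>2 * (y - c))"
    have pos: "Ps\<^sup>2 * (y - c) > 0" using True Ps by auto
    have T0: "0 \<le> T" unfolding T_def using pos g s Ps Pd y
      by (intro divide_nonneg_pos mult_nonneg_nonneg) auto
    have "(\<integral>\<^sup>+x. ennreal (exponential_density l1 x) *
            indicator {x. \<not> (Ps\<^sup>2 * x * y / (s * (Ps * x + (Ps + Pd) * y + s)) < g)} x \<partial>lborel)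
        = (\<integral>\<^sup>+x. ennreal (exponential_density l1 x) * indicator {T..} x \<partial>lborel)"
    proof (intro nn_integral_cong)
      fix x :: real
      show "ennreal (exponential_density l1 x) *
            indicator {x. \<not> (Ps\<^sup>2 * x * y / (s * (Ps * x + (Ps + Pd) * y + s)) < g)} x
          = ennreal (exponential_density l1 x) * indicator {T..} x"
      proof (cases "x < 0")
        case True then show ?thesis by (simp add: exponential_density_def)
      next
        case False
        have "T \<le> x \<longleftrightarrow> g * s * ((Ps + Pd) * y + s) \<le> x * (Ps\<^sup>2 * (y - c))"
          unfolding T_def using pos by (simp add: pos_divide_le_eq)
        then show ?thesis using key[of x] False by (auto split: split_indicator)
      qed
    qed
    also have "\<dots> = ennreal (exp (- T * l1))" by (rule exp_tail[OF l1 T0])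
    finally show ?thesis using True by (simp add: T_def c_def)
  qed
qed

lemma alg_lemma:
  fixes u g sigma2 Ps Pd eps1 eps2 :: real
  assumes u: "u > 0" and Ps: "Ps > 0" and e1: "eps1 > 0" and e2: "eps2 > 0" and gp: "g > 0" and s: "sigma2 > 0"
  shows "(g * sigma2 / Ps + u) * (1 / eps2) + g * sigma2 * ((Ps + Pd) * (g * sigma2 / Ps + u) + sigma2) / (Ps\<^sup>2 * u) * (1 / eps1)
          = (g * sigma2 / Ps) * ((Ps + Pd) / (Ps * eps1) + 1 / eps2) + (u / eps2 + (g * sigma2 * ((Ps + Pd) * (g * sigma2 / Ps) + sigma2) / (Ps\<^sup>2 * eps1)) / u)"
  using u Ps e1 e2 by (simp add: field_simps power2_eq_square)



theorem mainTheorem6: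
  fixes M :: "'a measure" and g1 g2 :: "'a \<Rightarrow> real"
    and eps1 eps2 Ps Pd sigma2 Rd :: real
  assumes "prob_space M"
    and "eps1 > 0" and "eps2 > 0"
    and "distributed M lborel g1 (exponential_density (1 / eps1))"
    and "distributed M lborel g2 (exponential_density (1 / eps2))"
    and "prob_space.indep_var M borel g1 borel g2"
    and "Ps > 0" and "Pd > 0" and "sigma2 > 0" and "Rd > 0"
  shows "let gamma_o = 2 powr (2 * Rd) - 1;
             z = 2 * gamma_o * sigma2 / Ps *
                 sqrt (1 / (eps1 * eps2) * ((Ps + Pd) / Ps + 1 / gamma_o))
         in measure M {\<omega> \<in> space M.
               Ps\<^sup>2 * g1 \<omega> * g2 \<omega> /
               (sigma2 * (Ps * g1 \<omega> + (Ps + Pd) * g2 \<omega> + sigma2)) < gamma_o}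
            = 1 - exp (- (gamma_o * sigma2 / Ps) * ((Ps + Pd) / (Ps * eps1) + 1 / eps2))
                  * z * besselK1 z"
proof -
  interpret P: prob_space M by fact
  note g1d = assms(4) and g2d = assms(5) and indep = assms(6)
  have e1: "eps1 > 0" and e2: "eps2 > 0" and Ps: "Ps > 0" and Pd: "Pd > 0" and s: "sigma2 > 0"
    using assms by auto
  define g where "g = 2 powr (2 * Rd) - (1::real)"
  have gpos: "g > 0"
  proof -
    have "(2::real) powr 0 < 2 powr (2 * Rd)" using assms(10) by (intro powr_less_mono) auto
    then show ?thesis by (simp add: g_def)
  qed
  define c where "c = g * sigma2 / Ps"
  have cpos: "c > 0" using gpos s Ps by (simp add: c_def)
  define \<beta> where "\<beta> = g * sigma2 * ((Ps + Pd) * c + sigma2) / (Ps\<^sup>2 * eps1)"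
  have \<beta>pos: "\<beta> > 0" unfolding \<beta>_def using gpos s Ps Pd e1 cpos
    by (intro divide_pos_pos mult_pos_pos add_pos_pos) auto
  define sb where "sb = sqrt \<beta>"
  define se where "se = sqrt eps2"
  have sb: "sb > 0" "sb\<^sup>2 = \<beta>" using \<beta>pos by (auto simp: sb_def)
  have se: "se > 0" "se\<^sup>2 = eps2" using e2 by (auto simp: se_def)
  define k where "k = sb * se"
  define z0 where "z0 = 2 * sb / se"
  have kpos: "k > 0" using sb se by (simp add: k_def)
  define Cc where "Cc = exp (- (g * sigma2 / Ps) * ((Ps + Pd) / (Ps * eps1) + 1 / eps2))"
  have Ccpos: "Cc > 0" by (simp add: Cc_def)
  define I where "I = (\<integral>\<^sup>+t. ennreal (exp (- z0 * cosh t) * cosh t) * indicator {0..} t \<partial>lborel)"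

  have zeq: "2 * g * sigma2 / Ps * sqrt (1 / (eps1 * eps2) * ((Ps + Pd) / Ps + 1 / g)) = z0"
  proof -
    have "1 / (eps1 * eps2) * ((Ps + Pd) / Ps + 1 / g) = ((sb / se) * (Ps / (g * sigma2)))\<^sup>2"
    proof -
      have "((sb / se) * (Ps / (g * sigma2)))\<^sup>2 = \<beta> / eps2 * (Ps / (g * sigma2))\<^sup>2"
        by (simp add: power_mult_distrib power_divide sb se)
      also have "\<dots> = 1 / (eps1 * eps2) * ((Ps + Pd) / Ps + 1 / g)"
        using gpos s Ps e1 e2 by (simp add: \<beta>_def c_def field_simps power2_eq_square)
      finally show ?thesis by simp
    qed
    moreover have "(sb / se) * (Ps / (g * sigma2)) \<ge> 0" using sb se Ps gpos s by simp
    ultimately have "sqrt (1 / (eps1 * eps2) * ((Ps + Pd) / Ps + 1 / g)) = (sb / se) * (Ps / (g * sigma2))"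
      by (metis real_sqrt_abs abs_of_nonneg)
    then show ?thesis using gpos s Ps by (simp add: z0_def field_simps)
  qed

  have [measurable]: "(cosh :: real \<Rightarrow> real) \<in> borel_measurable borel"
    by (intro borel_measurable_continuous_onI continuous_intros)
  have bes: "besselK1 z0 = enn2real I"
  proof -
    have "besselK1 z0 = integral\<^sup>L lborel (\<lambda>t. indicator {0..} t *\<^sub>R (exp (- z0 * cosh t) * cosh t))"
      by (simp add: besselK1_def set_lebesgue_integral_def)
    also have "\<dots> = enn2real (\<integral>\<^sup>+t. ennreal (indicator {0..} t *\<^sub>R (exp (- z0 * cosh t) * cosh t)) \<partial>lborel)"
      by (rule integral_eq_nn_integral) auto
    also have "(\<integral>\<^sup>+t. ennreal (indicator {0..} t *\<^sub>R (exp (- z0 * cosh t) * cosh t)) \<partial>lborel) = I"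
      unfolding I_def by (intro nn_integral_cong) (auto split: split_indicator)
    finally show ?thesis .
  qed

  have [measurable]: "g1 \<in> borel_measurable M" "g2 \<in> borel_measurable M"
    using distributed_measurable[OF g1d] distributed_measurable[OF g2d] by auto
  have eqs: "sets (case_bool lborel lborel i) = sets (case_bool borel borel i :: real measure)" for i
    by (simp split: bool.split)
  have indep': "P.indep_var lborel g1 lborel g2"
    using indep unfolding P.indep_var_def P.indep_vars_def2
    by (simp add: eqs measurable_cong_sets[OF refl eqs])
  have D: "distributed M (lborel \<Otimes>\<^sub>M lborel) (\<lambda>x. (g1 x, g2 x))
      (\<lambda>(x, y). ennreal (exponential_density (1 / eps1) x) * ennreal (exponential_density (1 / eps2) y))"
    by (rule P.distributed_joint_indep[OF lborel.sigma_finite_measure_axioms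
          lborel.sigma_finite_measure_axioms g1d g2d indep'])

  define S where "S = {\<omega> \<in> space M. \<not> (Ps\<^sup>2 * g1 \<omega> * g2 \<omega> /
               (sigma2 * (Ps * g1 \<omega> + (Ps + Pd) * g2 \<omega> + sigma2)) < g)}"
  define A where "A = {p :: real \<times> real. \<not> (Ps\<^sup>2 * fst p * snd p /
               (sigma2 * (Ps * fst p + (Ps + Pd) * snd p + sigma2)) < g)}"
  have Aeq: "A = {p \<in> space (lborel \<Otimes>\<^sub>M lborel). \<not> (Ps\<^sup>2 * fst p * snd p /
               (sigma2 * (Ps * fst p + (Ps + Pd) * snd p + sigma2)) < g)}"
    by (auto simp: A_def space_pair_measure)
  have Ameas[measurable]: "A \<in> sets (lborel \<Otimes>\<^sub>M lborel)"
    unfolding Aeq by measurable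
  have Seq: "S = (\<lambda>x. (g1 x, g2 x)) -` A \<inter> space M" by (auto simp: S_def A_def)
  have Sev: "S \<in> P.events" unfolding S_def by measurable

  have step1: "emeasure M S = (\<integral>\<^sup>+p. ((\<lambda>(x, y). ennreal (exponential_density (1 / eps1) x) *
        ennreal (exponential_density (1 / eps2) y)) p) * indicator A p \<partial>(lborel \<Otimes>\<^sub>M lborel))"
    unfolding Seq by (rule distributed_emeasure[OF D Ameas])
  also have "\<dots> = (\<integral>\<^sup>+y. \<integral>\<^sup>+x. ennreal (exponential_density (1 / eps1) x) *
        ennreal (exponential_density (1 / eps2) y) * indicator A (x, y) \<partial>lborel \<partial>lborel)"
    by (subst lborel_pair.nn_integral_snd[symmetric]) auto
  also have "\<dots> = (\<integral>\<^sup>+y. ennreal (exponential_density (1 / eps2) y) *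
      (if c < y then ennreal (exp (- (g * sigma2 * ((Ps + Pd) * y + sigma2) / (Ps\<^sup>2 * (y - c))) * (1 / eps1))) else 0) \<partial>lborel)"
  proof (intro nn_integral_cong)
    fix y :: real
    have "(\<integral>\<^sup>+x. ennreal (exponential_density (1 / eps1) x) * ennreal (exponential_density (1 / eps2) y) * indicator A (x, y) \<partial>lborel)
      = (\<integral>\<^sup>+x. ennreal (exponential_density (1 / eps2) y) * (ennreal (exponential_density (1 / eps1) x) *
            indicator {x. \<not> (Ps\<^sup>2 * x * y / (sigma2 * (Ps * x + (Ps + Pd) * y + sigma2)) < g)} x) \<partial>lborel)"
      using e1 e2 by (intro nn_integral_cong) (auto simp: A_def mult.commute split: split_indicator)
    also have "\<dots> = ennreal (exponential_density (1 / eps2) y) * (\<integral>\<^sup>+x. ennreal (exponential_density (1 / eps1) x) *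
            indicator {x. \<not> (Ps\<^sup>2 * x * y / (sigma2 * (Ps * x + (Ps + Pd) * y + sigma2)) < g)} x \<partial>lborel)"
      by (rule nn_integral_cmult) auto
    also have "\<dots> = ennreal (exponential_density (1 / eps2) y) *
      (if c < y then ennreal (exp (- (g * sigma2 * ((Ps + Pd) * y + sigma2) / (Ps\<^sup>2 * (y - c))) * (1 / eps1))) else 0)"
    proof (cases "y < 0")
      case True then show ?thesis by (simp add: exponential_density_def)
    next
      case False
      show ?thesis
        using inner[OF Ps Pd s gpos _ , of "1 / eps1" y] False e1 by (simp add: c_def)
    qed
    finally show "(\<integral>\<^sup>+x. ennreal (exponential_density (1 / eps1) x) * ennreal (exponential_density (1 / eps2) y) * indicator A (x, y) \<partial>lborel)
      = ennreal (exponential_density (1 / eps2) y) *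
      (if c < y then ennreal (exp (- (g * sigma2 * ((Ps + Pd) * y + sigma2) / (Ps\<^sup>2 * (y - c))) * (1 / eps1))) else 0)" .
  qed
  also have "\<dots> = (\<integral>\<^sup>+y. ennreal (Cc * (1 / eps2) * exp (- ((y - c) / eps2 + \<beta> / (y - c)))) * indicator {c<..} y \<partial>lborel)"
  proof (intro nn_integral_cong)
    fix y :: real
    show "ennreal (exponential_density (1 / eps2) y) *
      (if c < y then ennreal (exp (- (g * sigma2 * ((Ps + Pd) * y + sigma2) / (Ps\<^sup>2 * (y - c))) * (1 / eps1))) else 0)
      = ennreal (Cc * (1 / eps2) * exp (- ((y - c) / eps2 + \<beta> / (y - c)))) * indicator {c<..} y"
    proof (cases "c < y")
      case False then show ?thesis by simp
    next
      case True
      define u where "u = y - c"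
      have u: "u > 0" "y = c + u" using True by (auto simp: u_def)
      have yp: "\<not> y < 0" using True cpos by simp
      have alg: "y * (1 / eps2) + g * sigma2 * ((Ps + Pd) * y + sigma2) / (Ps\<^sup>2 * (y - c)) * (1 / eps1)
          = (g * sigma2 / Ps) * ((Ps + Pd) / (Ps * eps1) + 1 / eps2) + ((y - c) / eps2 + \<beta> / (y - c))"
      proof -
        have yc: "y - c = u" by (simp add: u_def)
        have ye: "y = g * sigma2 / Ps + u" using u(2) by (simp add: c_def)
        show ?thesis unfolding yc \<beta>_def unfolding ye c_def
          by (rule alg_lemma[OF u(1) Ps e1 e2 gpos s])
      qed
      have "exponential_density (1 / eps2) y *
          exp (- (g * sigma2 * ((Ps + Pd) * y + sigma2) / (Ps\<^sup>2 * (y - c))) * (1 / eps1))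
        = (1 / eps2) * exp (- (y * (1 / eps2) + g * sigma2 * ((Ps + Pd) * y + sigma2) / (Ps\<^sup>2 * (y - c)) * (1 / eps1)))"
        using yp by (simp add: exponential_density_def exp_add[symmetric] algebra_simps)
      also have "\<dots> = Cc * (1 / eps2) * exp (- ((y - c) / eps2 + \<beta> / (y - c)))"
        unfolding alg Cc_def by (simp add: exp_add[symmetric] exp_minus_inverse algebra_simps)
      finally have "exponential_density (1 / eps2) y *
          exp (- (g * sigma2 * ((Ps + Pd) * y + sigma2) / (Ps\<^sup>2 * (y - c))) * (1 / eps1))
        = Cc * (1 / eps2) * exp (- ((y - c) / eps2 + \<beta> / (y - c)))" .
      then show ?thesis using True e2
        by (simp add: ennreal_mult'[symmetric] exponential_density_nonneg)
    qed
  qed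
  also have "\<dots> = (\<integral>\<^sup>+u. ennreal (Cc * (1 / eps2) * exp (- (((c + 1 * u) - c) / eps2 + \<beta> / ((c + 1 * u) - c)))) * indicator {c<..} (c + 1 * u) \<partial>lborel)"
    using nn_integral_real_affine[where c=1 and t=c and
        f="\<lambda>y. ennreal (Cc * (1 / eps2) * exp (- ((y - c) / eps2 + \<beta> / (y - c)))) * indicator {c<..} y"]
    by simp
  also have "\<dots> = (\<integral>\<^sup>+u. ennreal (Cc * (1 / eps2)) * (ennreal (exp (- (u / eps2 + \<beta> / u))) * indicator {0<..} u) \<partial>lborel)"
  proof (rule nn_integral_cong)
    fix u :: real
    have h1: "c + 1 * u - c = u" by simp
    have h2: "(indicator {c<..} (c + 1 * u) :: ennreal) = indicator {0<..} u" by (simp split: split_indicator)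
    have h3: "ennreal (Cc * (1 / eps2) * exp (- (u / eps2 + \<beta> / u)))
        = ennreal (Cc * (1 / eps2)) * ennreal (exp (- (u / eps2 + \<beta> / u)))"
      by (rule ennreal_mult') (use Ccpos e2 in simp)
    show "ennreal (Cc * (1 / eps2) * exp (- (((c + 1 * u) - c) / eps2 + \<beta> / ((c + 1 * u) - c)))) * indicator {c<..} (c + 1 * u)
        = ennreal (Cc * (1 / eps2)) * (ennreal (exp (- (u / eps2 + \<beta> / u))) * indicator {0<..} u)"
      unfolding h1 h2 h3 by (simp only: mult.assoc)
  qed
  also have "\<dots> = ennreal (Cc * (1 / eps2)) * (\<integral>\<^sup>+u. ennreal (exp (- (u / eps2 + \<beta> / u))) * indicator {0<..} u \<partial>lborel)"
    by (rule nn_integral_cmult) auto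
  also have "(\<integral>\<^sup>+u. ennreal (exp (- (u / eps2 + \<beta> / u))) * indicator {0<..} u \<partial>lborel)
      = (\<integral>\<^sup>+t. ennreal ((\<lambda>u. exp (- (u / eps2 + \<beta> / u))) (k * exp t) * (k * exp t)) \<partial>lborel)"
    by (rule subst_exp[OF kpos]) auto
  also have "\<dots> = (\<integral>\<^sup>+t. ennreal k * ennreal (exp (- z0 * cosh t) * exp t) \<partial>lborel)"
  proof (intro nn_integral_cong)
    fix t :: real
    have "k * exp t / eps2 + \<beta> / (k * exp t) = z0 * cosh t"
      using sb se by (simp add: k_def z0_def cosh_def exp_minus field_simps power2_eq_square flip: se(2) sb(2))
    then show "ennreal ((\<lambda>u. exp (- (u / eps2 + \<beta> / u))) (k * exp t) * (k * exp t))
        = ennreal k * ennreal (exp (- z0 * cosh t) * exp t)"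
      using kpos by (simp add: ennreal_mult[symmetric] algebra_simps)
  qed
  also have "\<dots> = ennreal k * (\<integral>\<^sup>+t. ennreal (exp (- z0 * cosh t) * exp t) \<partial>lborel)"
    by (rule nn_integral_cmult) auto
  also have "(\<integral>\<^sup>+t. ennreal (exp (- z0 * cosh t) * exp t) \<partial>lborel)
      = (\<integral>\<^sup>+t. ennreal (exp (- z0 * cosh t) * (2 * cosh t)) * indicator {0..} t \<partial>lborel)"
    by (rule sym_cosh)
  also have "\<dots> = (\<integral>\<^sup>+t. ennreal 2 * (ennreal (exp (- z0 * cosh t) * cosh t) * indicator {0..} t) \<partial>lborel)"
  proof (rule nn_integral_cong)
    fix t :: real
    have "ennreal (exp (- z0 * cosh t) * (2 * cosh t)) = ennreal 2 * ennreal (exp (- z0 * cosh t) * cosh t)"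
      by (subst ennreal_mult'[symmetric]) (auto simp: algebra_simps)
    then show "ennreal (exp (- z0 * cosh t) * (2 * cosh t)) * indicator {0..} t
        = ennreal 2 * (ennreal (exp (- z0 * cosh t) * cosh t) * indicator {0..} t)"
      by (simp only: mult.assoc)
  qed
  also have "\<dots> = ennreal 2 * I"
    unfolding I_def by (rule nn_integral_cmult) auto
  finally have emS: "emeasure M S = ennreal (Cc * (1 / eps2)) * (ennreal k * (ennreal 2 * I))" .
  have "Cc * (1 / eps2) * k * 2 = Cc * z0"
    using se sb by (simp add: k_def z0_def field_simps power2_eq_square flip: se(2))
  then have emS': "emeasure M S = ennreal (Cc * z0) * I"
  proof -
    have "ennreal (Cc * (1 / eps2)) * (ennreal k * (ennreal 2 * I)) = ennreal (Cc * (1 / eps2) * k * 2) * I"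
    proof -
      have a: "ennreal (Cc * (1 / eps2) * k * 2) = ennreal (Cc * (1 / eps2) * k) * ennreal 2"
        by (rule ennreal_mult) (use Ccpos e2 kpos in simp)+
      have b: "ennreal (Cc * (1 / eps2) * k) = ennreal (Cc * (1 / eps2)) * ennreal k"
        by (rule ennreal_mult) (use Ccpos e2 kpos in simp)+
      show ?thesis unfolding a b by (simp only: mult.assoc)
    qed
    then show ?thesis unfolding emS \<open>Cc * (1 / eps2) * k * 2 = Cc * z0\<close> .
  qed
  have mS: "measure M S = Cc * z0 * besselK1 z0"
    unfolding measure_def emS' bes using sb se by (simp add: enn2real_mult Cc_def z0_def)
  have "measure M {\<omega> \<in> space M. Ps\<^sup>2 * g1 \<omega> * g2 \<omega> /
               (sigma2 * (Ps * g1 \<omega> + (Ps + Pd) * g2 \<omega> + sigma2)) < g} = measure M (space M - S)"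
    by (rule arg_cong[where f="measure M"]) (auto simp: S_def)
  also have "\<dots> = 1 - measure M S" by (rule P.prob_compl[OF Sev])
  finally show ?thesis
    unfolding Let_def g_def[symmetric] zeq mS Cc_def[symmetric] by (simp add: mult.assoc)
qed

end
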